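(* Let $N\in\mathbb{N}$ with $N>1$ and $0\le\mu<L<\infty$, and let $(\tau,\{\beta_{i,j}\},\{\lambda_{i,j}\})$ be an optimal solution of problem (Minimax-R) described in the context. Then: (i) for $0\le i<N-1$, if $\lambda_{i,i+1}=0$ then $\beta_{i,j}=0$ for all $j$; (ii) if $\lambda_{N-1,\star}=0$ then $\beta_{N-1,j}=0$ for all $j$; (iii) defining $\alpha_{i,j}=0$ if $\beta_{i,j}=0$, and otherwise $\alpha_{i,j}=\beta_{i,j}/\lambda_{i,i+1}$ for $1\le i<N-1$, $\alpha_{N-1,j}=\beta_{N-1,j}/\lambda_{N-1,\star}$, $\alpha_{N,j}=\beta_{N,j}$, the method generating iterates by $w_k-w_\star=(w_0-w_\star)(1-\frac{\mu}{L}\sum_{i=0}^{k-1}\alpha_{k,i})-\sum_{i=0}^{k-1}\frac{\alpha_{k,i}}{L}\nabla\tilde f(w_i)$, $k=1,\dots,N$, with $\tilde f(x)=f(x)-\frac\mu2\|x-w_\star\|^2$, satisfies $\|w_N-w_\star\|^2\le\tau\|w_0-w_\star\|^2$ for any $d\in\mathbb{N}$, $w_0\in\mathbb{R}^d$, $f\in\mathcal{F}_{\mu,L}(\mathbb{R}^d)$ and $w_\star\in\arg\min f$.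
   Context: $\mathcal{F}_{\mu,L}(\mathbb{R}^d)$ denotes the set of proper closed convex functions $f:\mathbb{R}^d\to\mathbb{R}$ such that for all $x,y$: $f(x)\le f(y)+\langle\nabla f(y);x-y\rangle+\frac L2\|x-y\|^2$ and $f(x)\ge f(y)+\langle\nabla f(y);x-y\rangle+\frac\mu2\|x-y\|^2$. Let $\mathbf{w}_0=e_1\in\mathbb{R}^{N+1}$, $\mathbf{g}_i=e_{i+2}\in\mathbb{R}^{N+1}$, $\mathbf{f}_i=e_{i+1}\in\mathbb{R}^N$ ($i=0,\dots,N-1$). Problem (Minimax-R): variables $\tau\in\mathbb{R}$; $\lambda_{i,i+1}\ge0$ ($i=0,\dots,N-2$), $\lambda_{\star,i}\ge0$ ($i=0,\dots,N-1$), $\lambda_{N-1,\star}\ge0$; $\beta_{i,j}\in\mathbb{R}$ ($1\le i\le N$, $0\le j\le i-1$). Minimize $\tau$ subject to $\begin{pmatrix}S''&\mathbf{w}_N\\\mathbf{w}_N^\top&1\end{pmatrix}\succeq0$ and $\sum_{i=0}^{N-2}\lambda_{i,i+1}(\mathbf{f}_{i+1}-\mathbf{f}_i)+\sum_{i=0}^{N-1}\lambda_{\star,i}\mathbf{f}_i-\lambda_{N-1,\star}\mathbf{f}_{N-1}=0$, where $\mathbf{w}_N=\mathbf{w}_0(1-\frac{\mu}{L}\sum_{i=0}^{N-1}\beta_{N,i})-\sum_{i=0}^{N-1}\frac{\beta_{N,i}}{L}\mathbf{g}_i$ and, writing $\mathrm{sym}(a,b)=\frac12(ab^\top+ba^\top)$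 and empty sums as $0$, $S''=\frac{1}{2(L-\mu)}\big(\lambda_{N-1,\star}\mathbf{g}_{N-1}\mathbf{g}_{N-1}^\top+\sum_{i=0}^{N-1}\lambda_{\star,i}\mathbf{g}_i\mathbf{g}_i^\top+\sum_{i=0}^{N-2}\lambda_{i,i+1}(\mathbf{g}_i-\mathbf{g}_{i+1})(\mathbf{g}_i-\mathbf{g}_{i+1})^\top\big)-\lambda_{\star,0}\mathrm{sym}(\mathbf{g}_0,\mathbf{w}_0)-\sum_{i=1}^{N-2}\big(\lambda_{i,i+1}-\frac{\mu}{L}\sum_{j=0}^{i-1}\beta_{i,j}\big)\mathrm{sym}(\mathbf{g}_i,\mathbf{w}_0)+\sum_{i=1}^{N-2}\sum_{j=0}^{i-1}\frac{\beta_{i,j}}{L}\mathrm{sym}(\mathbf{g}_i,\mathbf{g}_j)-\big(\lambda_{N-1,\star}-\frac{\mu}{L}\sum_{j=0}^{N-2}\beta_{N-1,j}\big)\mathrm{sym}(\mathbf{g}_{N-1},\mathbf{w}_0)+\sum_{j=0}^{N-2}\frac{\beta_{N-1,j}}{L}\mathrm{sym}(\mathbf{g}_{N-1},\mathbf{g}_j)+\sum_{i=0}^{N-2}\big(\lambda_{i,i+1}-\frac{\mu}{L}\sum_{j=0}^{i-1}\beta_{i,j}\big)\mathrm{sym}(\mathbf{g}_{i+1},\mathbf{w}_0)-\sum_{i=0}^{N-2}\sum_{j=0}^{i-1}\frac{\beta_{i,j}}{L}\mathrm{sym}(\mathbf{g}_{i+1},\mathbf{g}_j)+\tau\mathbf{w}_0\mathbf{w}_0^\top$.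 *)

theory Defs
  imports "HOL-Analysis.Analysis"
begin

text \<open>Vectors of R^n are functions nat => real (only indices < n matter);
  matrices are functions nat => nat => real.  Paper's e_k (1-based) is
  index k-1 here: w_0 = e_1 is index 0, g_i = e_{i+2} is index i+1,
  f_i = e_{i+1} (in R^N) is index i.\<close>

definition uvec :: "nat \<Rightarrow> nat \<Rightarrow> real" where
  "uvec k = (\<lambda>j. if j = k then 1 else 0)"

definition wvec0 :: "nat \<Rightarrow> real" where "wvec0 = uvec 0"
definition gvec :: "nat \<Rightarrow> nat \<Rightarrow> real" where "gvec i = uvec (i + 1)"
definition fvec :: "nat \<Rightarrow> nat \<Rightarrow> real" where "fvec i = uvec i"

definition outer :: "(nat \<Rightarrow> real) \<Rightarrow> (nat \<Rightarrow> real) \<Rightarrow> nat \<Rightarrow> nat \<Rightarrow> real" where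
  "outer a b = (\<lambda>p q. a p * b q)"

definition symm :: "(nat \<Rightarrow> real) \<Rightarrow> (nat \<Rightarrow> real) \<Rightarrow> nat \<Rightarrow> nat \<Rightarrow> real" where
  "symm a b = (\<lambda>p q. (a p * b q + b p * a q) / 2)"

definition psd :: "nat \<Rightarrow> (nat \<Rightarrow> nat \<Rightarrow> real) \<Rightarrow> bool" where
  "psd n M \<longleftrightarrow> (\<forall>p<n. \<forall>q<n. M p q = M q p) \<and>
     (\<forall>x :: nat \<Rightarrow> real. 0 \<le> (\<Sum>p<n. \<Sum>q<n. x p * M p q * x q))"

text \<open>Decision variables: tau; lamI i = lambda_{i,i+1} (i = 0..N-2);
  lamS i = lambda_{star,i} (i = 0..N-1); lamNs = lambda_{N-1,star};
  bet i j = beta_{i,j} (1 <= i <= N, 0 <= j <= i-1).\<close>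

definition wNvec :: "nat \<Rightarrow> real \<Rightarrow> real \<Rightarrow> (nat \<Rightarrow> nat \<Rightarrow> real) \<Rightarrow> nat \<Rightarrow> real" where
  "wNvec N \<mu> L bet = (\<lambda>p. wvec0 p * (1 - \<mu> / L * (\<Sum>i<N. bet N i))
                          - (\<Sum>i<N. bet N i / L * gvec i p))"

definition Smat :: "nat \<Rightarrow> real \<Rightarrow> real \<Rightarrow> real \<Rightarrow> (nat \<Rightarrow> real) \<Rightarrow> (nat \<Rightarrow> real) \<Rightarrow> real
     \<Rightarrow> (nat \<Rightarrow> nat \<Rightarrow> real) \<Rightarrow> nat \<Rightarrow> nat \<Rightarrow> real" where
  "Smat N \<mu> L \<tau> lamI lamS lamNs bet = (\<lambda>p q.
      1 / (2 * (L - \<mu>)) *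
        ( lamNs * outer (gvec (N - 1)) (gvec (N - 1)) p q
        + (\<Sum>i<N. lamS i * outer (gvec i) (gvec i) p q)
        + (\<Sum>i<N - 1. lamI i * outer (\<lambda>r. gvec i r - gvec (i + 1) r)
                                        (\<lambda>r. gvec i r - gvec (i + 1) r) p q))
      - lamS 0 * symm (gvec 0) wvec0 p q
      - (\<Sum>i\<in>{1..N - 2}. (lamI i - \<mu> / L * (\<Sum>j<i. bet i j)) * symm (gvec i) wvec0 p q)
      + (\<Sum>i\<in>{1..N - 2}. \<Sum>j<i. bet i j / L * symm (gvec i) (gvec j) p q)
      - (lamNs - \<mu> / L * (\<Sum>j<N - 1. bet (N - 1) j)) * symm (gvec (N - 1)) wvec0 p q
      + (\<Sum>j<N - 1. bet (N - 1) j / L * symm (gvec (N - 1)) (gvec j) p q)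
      + (\<Sum>i<N - 1. (lamI i - \<mu> / L * (\<Sum>j<i. bet i j)) * symm (gvec (i + 1)) wvec0 p q)
      - (\<Sum>i<N - 1. \<Sum>j<i. bet i j / L * symm (gvec (i + 1)) (gvec j) p q)
      + \<tau> * outer wvec0 wvec0 p q)"

definition blockmat :: "nat \<Rightarrow> (nat \<Rightarrow> nat \<Rightarrow> real) \<Rightarrow> (nat \<Rightarrow> real) \<Rightarrow> nat \<Rightarrow> nat \<Rightarrow> real" where
  "blockmat n S v = (\<lambda>p q. if p < n \<and> q < n then S p q
                            else if p < n then v p
                            else if q < n then v q
                            else 1)"

definition minimaxR_feasible ::
  "nat \<Rightarrow> real \<Rightarrow> real \<Rightarrow> real \<Rightarrow> (nat \<Rightarrow> real) \<Rightarrow> (nat \<Rightarrow> real) \<Rightarrow> real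
     \<Rightarrow> (nat \<Rightarrow> nat \<Rightarrow> real) \<Rightarrow> bool" where
  "minimaxR_feasible N \<mu> L \<tau> lamI lamS lamNs bet \<longleftrightarrow>
     (\<forall>i<N - 1. 0 \<le> lamI i) \<and> (\<forall>i<N. 0 \<le> lamS i) \<and> 0 \<le> lamNs \<and>
     psd (N + 2) (blockmat (N + 1) (Smat N \<mu> L \<tau> lamI lamS lamNs bet) (wNvec N \<mu> L bet)) \<and>
     (\<forall>k<N. (\<Sum>i<N - 1. lamI i * (fvec (i + 1) k - fvec i k))
            + (\<Sum>i<N. lamS i * fvec i k) - lamNs * fvec (N - 1) k = 0)"

definition minimaxR_optimal ::
  "nat \<Rightarrow> real \<Rightarrow> real \<Rightarrow> real \<Rightarrow> (nat \<Rightarrow> real) \<Rightarrow> (nat \<Rightarrow> real) \<Rightarrow> real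
     \<Rightarrow> (nat \<Rightarrow> nat \<Rightarrow> real) \<Rightarrow> bool" where
  "minimaxR_optimal N \<mu> L \<tau> lamI lamS lamNs bet \<longleftrightarrow>
     minimaxR_feasible N \<mu> L \<tau> lamI lamS lamNs bet \<and>
     (\<forall>\<tau>' lamI' lamS' lamNs' bet'.
        minimaxR_feasible N \<mu> L \<tau>' lamI' lamS' lamNs' bet' \<longrightarrow> \<tau> \<le> \<tau>')"

definition alpha_coef :: "nat \<Rightarrow> (nat \<Rightarrow> real) \<Rightarrow> real \<Rightarrow> (nat \<Rightarrow> nat \<Rightarrow> real) \<Rightarrow> nat \<Rightarrow> nat \<Rightarrow> real" where
  "alpha_coef N lamI lamNs bet i j =
     (if bet i j = 0 then 0
      else if 1 \<le> i \<and> i < N - 1 then bet i j / lamI i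
      else if i = N - 1 then bet i j / lamNs
      else if i = N then bet i j
      else 0)"

text \<open>f is real-valued everywhere with gradient gf (so proper and, being
  differentiable hence continuous, closed), convex, and satisfies the two
  quadratic bounds.\<close>
definition in_F :: "real \<Rightarrow> real \<Rightarrow> ('a::euclidean_space \<Rightarrow> real) \<Rightarrow> ('a \<Rightarrow> 'a) \<Rightarrow> bool" where
  "in_F \<mu> L f gf \<longleftrightarrow>
     (\<forall>x. (f has_derivative (\<lambda>h. inner (gf x) h)) (at x)) \<and>
     convex_on UNIV f \<and>
     (\<forall>x y. f x \<le> f y + inner (gf y) (x - y) + L / 2 * (norm (x - y))\<^sup>2) \<and>
     (\<forall>x y. f x \<ge> f y + inner (gf y) (x - y) + \<mu> / 2 * (norm (x - y))\<^sup>2)"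

end

theory Submission
  imports Defs
begin


lemma quad_two:
  fixes M :: "nat \<Rightarrow> nat \<Rightarrow> real"
  assumes "a < n" "b < n" "a \<noteq> b"
  shows "(\<Sum>p<n. \<Sum>q<n. (s * uvec a p + t * uvec b p) * M p q * (s * uvec a q + t * uvec b q))
     = s * s * M a a + s * t * (M a b + M b a) + t * t * M b b"
proof -
  have e: "\<And>p q. (s * uvec a p + t * uvec b p) * M p q * (s * uvec a q + t * uvec b q)
     = s * s * (uvec a p * (uvec a q * M p q)) + s * t * (uvec a p * (uvec b q * M p q)) + t * s * (uvec b p * (uvec a q * M p q))
       + t * t * (uvec b p * (uvec b q * M p q))"
    by (simp add: algebra_simps)
  have d: "\<And>c f. (\<Sum>p<n. uvec c p * f p) = (if c < n then f c else 0)"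
  proof -
    fix c f
    have "\<And>p. uvec c p * f p = (if p = c then f p else 0)" by (simp add: uvec_def)
    then show "(\<Sum>p<n. uvec c p * f p) = (if c < n then f c else 0)" by (simp add: sum.delta')
  qed
  show ?thesis
    unfolding e
    by (simp add: sum.distrib sum_distrib_left[symmetric] d assms algebra_simps)
qed

lemma psd_zero_diag:
  assumes "psd n M" "a < n" "b < n" "M a a = 0"
  shows "M a b = 0"
proof (cases "a = b")
  case True then show ?thesis using assms by simp
next
  case False
  have sym: "M b a = M a b" using assms unfolding psd_def by auto
  have "\<And>s. 0 \<le> 2 * s*M a b + M b b"
  proof -
    fix s
    have "0 \<le> (\<Sum>p<n. \<Sum>q<n. (s * uvec a p + 1 * uvec b p) * M p q * (s * uvec a q + 1 * uvec b q))"
      using assms(1) unfolding psd_def by (rule conjE) (erule allE)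
    also have "\<dots> = 2 * s*M a b + M b b" using quad_two[OF assms(2,3) False, of s 1 M] assms(4) sym by simp
    finally show "0 \<le> 2 * s*M a b + M b b" .
  qed
  from this[of "- (M b b + 1) / (2 * M a b)"] show ?thesis
    by (cases "M a b = 0") (auto simp: field_simps)
qed


lemma sum1_single:
  fixes f :: "nat \<Rightarrow> real"
  assumes "finite A" "j \<in> A" "\<forall>l\<in>A. l \<noteq> j \<longrightarrow> f l = 0"
  shows "(\<Sum>l\<in>A. f l) = f j"
  using assms by (simp add: sum.remove)

lemma sum2_single:
  fixes f :: "nat \<Rightarrow> nat \<Rightarrow> real"
  assumes "finite A" "i \<in> A" "j < i" "\<forall>k\<in>A. \<forall>l<k. (k,l) \<noteq> (i,j) \<longrightarrow> f k l = 0"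
  shows "(\<Sum>k\<in>A. \<Sum>l<k. f k l) = f i j"
proof -
  have "(\<Sum>k\<in>A. \<Sum>l<k. f k l) = (\<Sum>l<i. f i l)"
    using assms by (intro sum1_single) (auto intro!: sum.neutral)
  also have "\<dots> = f i j" using assms by (intro sum1_single) auto
  finally show ?thesis .
qed

lemma Smat_entries:
  assumes N: "1 < N" and ji: "j < i" and iN: "i < N"
   and HI: "\<forall>k\<le>i. k < N - 1 \<longrightarrow> lamI k = 0"
   and HS: "\<forall>k\<le>i. lamS k = 0"
   and HN: "i = N - 1 \<longrightarrow> lamNs = 0"
   and HB: "\<forall>l<i-1. bet (i-1) l = 0"
  shows "Smat N \<mu> L \<tau> lamI lamS lamNs bet (i+1) (i+1) = 0"
    and "Smat N \<mu> L \<tau> lamI lamS lamNs bet (i+1) (j+1) = bet i j / (2*L)"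
proof -
  let ?a = "i+1" and ?b = "j+1"
  have w0: "wvec0 ?a = 0" "wvec0 ?b = 0" by (auto simp: wvec0_def uvec_def)
  have o0: "outer wvec0 wvec0 (Suc i) q = 0" for q using w0 by (simp add: outer_def)
  have symw: "\<And>g p q. p \<in> {?a,?b} \<Longrightarrow> q \<in> {?a,?b} \<Longrightarrow> symm g wvec0 p q = 0"
    using w0 by (auto simp: symm_def)
  have o1: "lamNs * outer (gvec (N - 1)) (gvec (N - 1)) p q = 0" if "p \<in> {?a,?b}" "q \<in> {?a,?b}" for p q
    using that HN ji iN by (auto simp: outer_def gvec_def uvec_def)
  have o2: "(\<Sum>k<N. lamS k * outer (gvec k) (gvec k) p q) = 0" if "p \<in> {?a,?b}" "q \<in> {?a,?b}" for p q
    using that HS ji by (intro sum.neutral) (auto simp: outer_def gvec_def uvec_def)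
  have o3: "(\<Sum>k<N - 1. lamI k * outer (\<lambda>r. gvec k r - gvec (k + 1) r) (\<lambda>r. gvec k r - gvec (k + 1) r) p q) = 0"
    if "p \<in> {?a,?b}" "q \<in> {?a,?b}" for p q
    using that HI ji by (intro sum.neutral) (auto simp: outer_def gvec_def uvec_def)
  have s4a: "(\<Sum>k\<in>{1..N - 2}. \<Sum>l<k. bet k l / L * symm (gvec k) (gvec l) ?a ?a) = 0"
    by (intro sum.neutral ballI) (auto simp: symm_def gvec_def uvec_def)
  have s6a: "(\<Sum>l<N - 1. bet (N - 1) l / L * symm (gvec (N - 1)) (gvec l) ?a ?a) = 0"
    by (intro sum.neutral ballI) (auto simp: symm_def gvec_def uvec_def)
  have s8a: "(\<Sum>k<N - 1. \<Sum>l<k. bet k l / L * symm (gvec (k + 1)) (gvec l) ?a ?a) = 0"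
    by (intro sum.neutral ballI) (auto simp: symm_def gvec_def uvec_def)
  have s8b: "(\<Sum>k<N - 1. \<Sum>l<k. bet k l / L * symm (gvec (k + 1)) (gvec l) ?a ?b) = 0"
    using HB ji by (intro sum.neutral ballI) (auto simp: symm_def gvec_def uvec_def)
  have s46b: "(\<Sum>k\<in>{1..N - 2}. \<Sum>l<k. bet k l / L * symm (gvec k) (gvec l) ?a ?b)
     + (\<Sum>l<N - 1. bet (N - 1) l / L * symm (gvec (N - 1)) (gvec l) ?a ?b) = bet i j / (2*L)"
  proof (cases "i = N - 1")
    case True
    have "(\<Sum>k\<in>{1..N - 2}. \<Sum>l<k. bet k l / L * symm (gvec k) (gvec l) ?a ?b) = 0"
      using True ji by (intro sum.neutral ballI) (auto simp: symm_def gvec_def uvec_def)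
    moreover have "(\<Sum>l<N - 1. bet (N - 1) l / L * symm (gvec (N - 1)) (gvec l) ?a ?b) = bet i j / (2*L)"
      using True ji by (subst sum1_single[where j=j]) (auto simp: symm_def gvec_def uvec_def)
    ultimately show ?thesis by simp
  next
    case False
    have "(\<Sum>l<N - 1. bet (N - 1) l / L * symm (gvec (N - 1)) (gvec l) ?a ?b) = 0"
      using False ji iN by (intro sum.neutral ballI) (auto simp: symm_def gvec_def uvec_def)
    moreover have "(\<Sum>k\<in>{1..N - 2}. \<Sum>l<k. bet k l / L * symm (gvec k) (gvec l) ?a ?b) = bet i j / (2*L)"
      using False ji iN by (subst sum2_single[where i=i and j=j]) (auto simp: symm_def gvec_def uvec_def)
    ultimately show ?thesis by simp
  qed
  show "Smat N \<mu> L \<tau> lamI lamS lamNs bet (i+1) (i+1) = 0"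
    unfolding Smat_def using o1[of ?a ?a] o2[of ?a ?a] o3[of ?a ?a] symw[of ?a ?a] s4a s6a s8a
    by (auto simp: o0)
  show "Smat N \<mu> L \<tau> lamI lamS lamNs bet (i+1) (j+1) = bet i j / (2*L)"
    unfolding Smat_def using o1[of ?a ?b] o2[of ?a ?b] o3[of ?a ?b] symw[of ?a ?b] s46b s8b
    by (auto simp: o0)
qed


definition Phi :: "nat \<Rightarrow> (nat \<Rightarrow> 'a::real_inner) \<Rightarrow> (nat \<Rightarrow> nat \<Rightarrow> real) \<Rightarrow> real" where
  "Phi n v M = (\<Sum>p<n. \<Sum>q<n. M p q * inner (v p) (v q))"

definition lin :: "nat \<Rightarrow> (nat \<Rightarrow> 'a::real_vector) \<Rightarrow> (nat \<Rightarrow> real) \<Rightarrow> 'a" where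
  "lin n v a = (\<Sum>p<n. a p *\<^sub>R v p)"

lemma Phi_add: "Phi n v (\<lambda>p q. A p q + B p q) = Phi n v A + Phi n v B"
  by (simp add: Phi_def distrib_right sum.distrib)
lemma Phi_diff: "Phi n v (\<lambda>p q. A p q - B p q) = Phi n v A - Phi n v B"
  by (simp add: Phi_def left_diff_distrib sum_subtractf)
lemma Phi_cmult: "Phi n v (\<lambda>p q. c * A p q) = c * Phi n v A"
  by (simp add: Phi_def sum_distrib_left mult.assoc)
lemma Phi_sum: "Phi n v (\<lambda>p q. \<Sum>i\<in>I. F i p q) = (\<Sum>i\<in>I. Phi n v (F i))"
  by (simp add: Phi_def sum_distrib_right) (subst sum.swap, rule sum.cong[OF refl], subst sum.swap, simp)
lemma Phi_outer: "Phi n v (outer a b) = inner (lin n v a) (lin n v b)"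
  by (simp add: Phi_def lin_def outer_def inner_sum_left inner_sum_right sum_distrib_left mult_ac) (rule sum.swap)
lemma Phi_symm: "Phi n v (symm a b) = inner (lin n v a) (lin n v b)"
proof -
  have "symm a b = (\<lambda>p q. (1/2) * outer a b p q + (1/2) * outer b a p q)"
    by (auto simp: symm_def outer_def fun_eq_iff field_simps)
  then show ?thesis by (simp only: Phi_add Phi_cmult Phi_outer) (simp add: inner_commute)
qed

lemma lin_diff: "lin n v (\<lambda>r. a r - b r) = lin n v a - lin n v b"
  by (simp add: lin_def scaleR_diff_left sum_subtractf)
lemma lin_uvec: "k < n \<Longrightarrow> lin n v (uvec k) = v k"
proof -
  assume k: "k < n"
  have "\<And>p. uvec k p *\<^sub>R v p = (if p = k then v p else 0)" by (simp add: uvec_def)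
  then show ?thesis using k by (simp add: lin_def sum.delta')
qed

lemma lin_add: "lin n v (\<lambda>r. a r + b r) = lin n v a + lin n v b"
  by (simp add: lin_def scaleR_add_left sum.distrib)
lemma lin_rmult: "lin n v (\<lambda>r. a r * c) = c *\<^sub>R lin n v a"
  by (simp add: lin_def scaleR_sum_right mult.commute)
lemma lin_cmult: "lin n v (\<lambda>r. c * a r) = c *\<^sub>R lin n v a"
  by (simp add: lin_def scaleR_sum_right)
lemma lin_sum: "lin n v (\<lambda>r. \<Sum>i\<in>I. F i r) = (\<Sum>i\<in>I. lin n v (F i))"
  by (simp add: lin_def scaleR_sum_left) (rule sum.swap)

lemma lin_wN: "lin n v (wNvec N \<mu> L bet) =
   (1 - \<mu> / L * (\<Sum>i<N. bet N i)) *\<^sub>R lin n v wvec0 - (\<Sum>i<N. (bet N i / L) *\<^sub>R lin n v (gvec i))"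
  unfolding wNvec_def by (simp only: lin_diff lin_rmult lin_sum lin_cmult)

lemma Phi_psd:
  fixes v :: "nat \<Rightarrow> 'a::euclidean_space"
  assumes "psd n M" shows "0 \<le> Phi n v M"
proof -
  have e: "\<And>p q. inner (v p) (v q) = (\<Sum>b\<in>Basis. (v p \<bullet> b) * (v q \<bullet> b))"
    by (rule euclidean_inner)
  have "Phi n v M = (\<Sum>p<n. \<Sum>q<n. \<Sum>b\<in>Basis. (v p \<bullet> b) * M p q * (v q \<bullet> b))"
    unfolding Phi_def e by (simp add: sum_distrib_left mult_ac)
  also have "\<dots> = (\<Sum>p<n. \<Sum>b\<in>Basis. \<Sum>q<n. (v p \<bullet> b) * M p q * (v q \<bullet> b))"
    by (rule sum.cong[OF refl], rule sum.swap)
  also have "\<dots> = (\<Sum>b\<in>Basis. \<Sum>p<n. \<Sum>q<n. (v p \<bullet> b) * M p q * (v q \<bullet> b))"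
    by (rule sum.swap)
  also have "\<dots> \<ge> 0"
  proof (rule sum_nonneg)
    fix b :: 'a
    have "\<forall>x. 0 \<le> (\<Sum>p<n. \<Sum>q<n. x p * M p q * x q)" using assms unfolding psd_def by blast
    then show "0 \<le> (\<Sum>p<n. \<Sum>q<n. (v p \<bullet> b) * M p q * (v q \<bullet> b))"
      by (rule allE[where x="\<lambda>p. v p \<bullet> b"]) simp
  qed
  finally show ?thesis by simp
qed

lemma Phi_block:
  fixes v :: "nat \<Rightarrow> 'a::real_inner"
  shows "Phi (Suc n) (\<lambda>p. if p < n then v p else z) (blockmat n S w)
       = Phi n v S + 2 * inner (lin n v w) z + inner z z"
proof -
  let ?V = "\<lambda>p. if p < n then v p else z"
  have 1: "(\<Sum>q<Suc n. blockmat n S w p q * inner (?V p) (?V q))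
      = (\<Sum>q<n. S p q * inner (v p) (v q)) + w p * inner (v p) z" if "p < n" for p
  proof -
    have "(\<Sum>q<n. blockmat n S w p q * inner (?V p) (?V q)) = (\<Sum>q<n. S p q * inner (v p) (v q))"
      using that by (intro sum.cong) (auto simp: blockmat_def)
    then show ?thesis using that by (simp add: blockmat_def)
  qed
  have 2: "(\<Sum>q<Suc n. blockmat n S w n q * inner (?V n) (?V q))
      = (\<Sum>q<n. w q * inner (v q) z) + inner z z"
  proof -
    have "(\<Sum>q<n. blockmat n S w n q * inner (?V n) (?V q)) = (\<Sum>q<n. w q * inner (v q) z)"
      by (intro sum.cong) (auto simp: blockmat_def inner_commute)
    then show ?thesis by (simp add: blockmat_def)
  qed
  have "Phi (Suc n) ?V (blockmat n S w)
      = (\<Sum>p<n. \<Sum>q<Suc n. blockmat n S w p q * inner (?V p) (?V q))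
        + (\<Sum>q<Suc n. blockmat n S w n q * inner (?V n) (?V q))"
    unfolding Phi_def by (rule sum.lessThan_Suc)
  also have "\<dots> = (\<Sum>p<n. (\<Sum>q<n. S p q * inner (v p) (v q)) + w p * inner (v p) z)
        + ((\<Sum>q<n. w q * inner (v q) z) + inner z z)"
    using 1 2 by simp
  also have "\<dots> = Phi n v S + 2 * inner (lin n v w) z + inner z z"
    by (simp add: Phi_def lin_def sum.distrib inner_sum_left)
  finally show ?thesis .
qed


lemma Phi_Smat:
  fixes v :: "nat \<Rightarrow> 'a::real_inner"
  assumes "1 < N"
  shows "Phi (N+1) v (Smat N \<mu> L \<tau> lamI lamS lamNs bet) =
     1 / (2 * (L - \<mu>)) * (lamNs * inner (v N) (v N) + (\<Sum>i<N. lamS i * inner (v (Suc i)) (v (Suc i)))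
        + (\<Sum>i<N-1. lamI i * inner (v (Suc i) - v (Suc (Suc i))) (v (Suc i) - v (Suc (Suc i)))))
     - lamS 0 * inner (v 1) (v 0)
     - (\<Sum>i\<in>{1..N-2}. (lamI i - \<mu>/L * (\<Sum>j<i. bet i j)) * inner (v (Suc i)) (v 0))
     + (\<Sum>i\<in>{1..N-2}. \<Sum>j<i. bet i j / L * inner (v (Suc i)) (v (Suc j)))
     - (lamNs - \<mu>/L * (\<Sum>j<N-1. bet (N-1) j)) * inner (v N) (v 0)
     + (\<Sum>j<N-1. bet (N-1) j / L * inner (v N) (v (Suc j)))
     + (\<Sum>i<N-1. (lamI i - \<mu>/L * (\<Sum>j<i. bet i j)) * inner (v (Suc (Suc i))) (v 0))
     - (\<Sum>i<N-1. \<Sum>j<i. bet i j / L * inner (v (Suc (Suc i))) (v (Suc j)))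
     + \<tau> * inner (v 0) (v 0)"
proof -
  have g: "\<And>i. i < N \<Longrightarrow> lin (Suc N) v (gvec i) = v (Suc i)"
    by (simp add: gvec_def lin_uvec)
  have w: "lin (Suc N) v wvec0 = v 0" by (simp add: wvec0_def lin_uvec)
  have NN: "Suc (N - 1) = N" using assms by simp
  show ?thesis
    unfolding Smat_def
    apply (simp only: Phi_add Phi_diff Phi_cmult Phi_sum Phi_outer Phi_symm lin_diff)
    using assms apply (simp add: g w NN)
    apply (intro arg_cong2[where f="(-)"] sum.cong refl)
      apply (auto simp: g)
    done
qed


lemma interp:
  fixes h :: "'a::real_inner \<Rightarrow> real" and G :: "'a \<Rightarrow> 'a"
  assumes M: "0 < M"
    and lo: "\<forall>x y. h x \<ge> h y + inner (G y) (x - y)"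
    and up: "\<forall>x y. h x \<le> h y + inner (G y) (x - y) + M / 2 * (norm (x - y))\<^sup>2"
  shows "h x \<ge> h y + inner (G y) (x - y) + (norm (G x - G y))\<^sup>2 / (2 * M)"
proof -
  define d where "d = G x - G y"
  define z where "z = x - (1 / M) *\<^sub>R d"
  have l: "h z \<ge> h y + inner (G y) (z - y)" using lo by blast
  have u: "h z \<le> h x + inner (G x) (z - x) + M / 2 * (norm (z - x))\<^sup>2" using up by blast
  have e1: "inner (G y) (z - y) = inner (G y) (x - y) - inner (G y) d / M"
    by (simp add: z_def inner_diff_right algebra_simps)
  have e2: "inner (G x) (z - x) = - (inner (G x) d / M)"
    by (simp add: z_def inner_diff_right algebra_simps)
  have e3: "(norm (z - x))\<^sup>2 = (norm d)\<^sup>2 / M^2"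
    using M by (simp add: z_def power_divide)
  have e4: "inner (G x) d - inner (G y) d = (norm d)\<^sup>2"
    by (simp add: d_def power2_norm_eq_inner inner_diff_left)
  have "h y + inner (G y) (x - y) - inner (G y) d / M \<le> h x - (inner (G x) d / M) + M / 2 * ((norm d)\<^sup>2 / M^2)"
  proof -
    have u': "h z \<le> h x - (inner (G x) d / M) + M / 2 * ((norm d)\<^sup>2 / M^2)" using u e2 e3 by simp
    show ?thesis using l u' e1 by linarith
  qed
  moreover have "M / 2 * ((norm d)\<^sup>2 / M^2) = (norm d)\<^sup>2 / (2 * M)" using M by (simp add: power2_eq_square field_simps)
  moreover have "inner (G x) d / M - inner (G y) d / M = (norm d)\<^sup>2 / M" using e4 by (simp add: diff_divide_distrib[symmetric])
  moreover have "(norm d)\<^sup>2 / M - (norm d)\<^sup>2 / (2 * M) = (norm d)\<^sup>2 / (2 * M)" using M by (simp add: field_simps)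
  ultimately show ?thesis unfolding d_def by linarith
qed

lemma sq_id:
  fixes x y ws :: "'a::real_inner"
  shows "(norm (x - ws))\<^sup>2 = (norm (x - y))\<^sup>2 + (norm (y - ws))\<^sup>2 + 2 * inner (y - ws) (x - y)"
  by (simp add: power2_norm_eq_inner inner_diff_left inner_diff_right inner_commute algebra_simps)

lemma tilde_bounds:
  fixes f :: "'a::euclidean_space \<Rightarrow> real" and ws :: 'a
  assumes F: "in_F \<mu> L f gf"
  defines "h \<equiv> \<lambda>x. f x - \<mu> / 2 * (norm (x - ws))\<^sup>2"
    and "G \<equiv> \<lambda>x. gf x - \<mu> *\<^sub>R (x - ws)"
  shows "\<forall>x y. h x \<ge> h y + inner (G y) (x - y)"
    and "\<forall>x y. h x \<le> h y + inner (G y) (x - y) + (L - \<mu>) / 2 * (norm (x - y))\<^sup>2"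
proof -
  have lo: "\<And>x y. f x \<ge> f y + inner (gf y) (x - y) + \<mu> / 2 * (norm (x - y))\<^sup>2"
    and up: "\<And>x y. f x \<le> f y + inner (gf y) (x - y) + L / 2 * (norm (x - y))\<^sup>2"
    using F unfolding in_F_def by auto
  have key: "\<And>x y. h y + inner (G y) (x - y) = f y + inner (gf y) (x - y) - \<mu> / 2 * (norm (x - ws))\<^sup>2 + \<mu> / 2 * (norm (x - y))\<^sup>2"
  proof -
    fix x y
    show "h y + inner (G y) (x - y) = f y + inner (gf y) (x - y) - \<mu> / 2 * (norm (x - ws))\<^sup>2 + \<mu> / 2 * (norm (x - y))\<^sup>2"
    proof -
      have A: "h y + inner (G y) (x-y) = f y + inner (gf y) (x-y) - \<mu>/2 * (norm (y-ws))\<^sup>2 - \<mu> * inner (y - ws) (x-y)"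
        unfolding h_def G_def by (simp add: inner_diff_left[of "gf y"])
      have B: "\<mu>/2 * (norm (x-ws))\<^sup>2 = \<mu>/2 * (norm (x-y))\<^sup>2 + \<mu>/2 * (norm (y-ws))\<^sup>2 + \<mu> * inner (y - ws) (x-y)"
        by (simp add: sq_id[of x ws y] algebra_simps)
      show ?thesis using A B by linarith
    qed
  qed
  show "\<forall>x y. h x \<ge> h y + inner (G y) (x - y)"
  proof (intro allI)
    fix x y
    have hx: "h x = f x - \<mu>/2*(norm(x-ws))\<^sup>2" by (simp add: h_def)
    show "h x \<ge> h y + inner (G y) (x - y)" using key[where x=x and y=y] lo[where x=x and y=y] hx by linarith
  qed
  show "\<forall>x y. h x \<le> h y + inner (G y) (x - y) + (L - \<mu>) / 2 * (norm (x - y))\<^sup>2"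
  proof (intro allI)
    fix x y show "h x \<le> h y + inner (G y) (x - y) + (L - \<mu>) / 2 * (norm (x - y))\<^sup>2"
    proof -
      have hx: "h x = f x - \<mu>/2*(norm(x-ws))\<^sup>2" by (simp add: h_def)
      have "(L - \<mu>) / 2 * (norm (x - y))\<^sup>2 = L/2 * (norm (x - y))\<^sup>2 - \<mu>/2 * (norm (x - y))\<^sup>2"
        by (simp add: left_diff_distrib diff_divide_distrib)
      then show ?thesis using key[where x=x and y=y] up[where x=x and y=y] hx by linarith
    qed
  qed
qed

lemma grad_zero:
  fixes f :: "'a::euclidean_space \<Rightarrow> real"
  assumes F: "in_F \<mu> L f gf" and L: "0 < L" and mn: "\<forall>x. f ws \<le> f x"
  shows "gf ws = 0"
proof -
  let ?g = "gf ws"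
  have "f (ws - (1/L) *\<^sub>R ?g) \<le> f ws + inner ?g ((ws - (1/L) *\<^sub>R ?g) - ws) + L / 2 * (norm ((ws - (1/L) *\<^sub>R ?g) - ws))\<^sup>2"
    using F unfolding in_F_def by blast
  also have "\<dots> = f ws - (norm ?g)\<^sup>2 / (2 * L)"
    using L by (simp add: power2_norm_eq_inner[symmetric] power_divide power2_eq_square field_simps)
  finally have "(norm ?g)\<^sup>2 \<le> 0" using mn[rule_format, of "ws - (1/L) *\<^sub>R ?g"] L
    by (smt (verit) divide_pos_pos zero_less_power2 zero_less_norm_iff)
  then show ?thesis by simp
qed


lemma cons_y:
  fixes y :: "nat \<Rightarrow> real"
  assumes C: "\<forall>k<N. (\<Sum>i<N - 1. lamI i * (fvec (i + 1) k - fvec i k))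
            + (\<Sum>i<N. lamS i * fvec i k) - lamNs * fvec (N - 1) k = 0"
  and N: "1 < N"
  shows "(\<Sum>i<N - 1. lamI i * (y (i+1) - y i)) + (\<Sum>i<N. lamS i * y i) - lamNs * y (N-1) = 0"
proof -
  have d: "\<And>m. m < N \<Longrightarrow> (\<Sum>k<N. y k * fvec m k) = y m"
  proof -
    fix m assume m: "m < N"
    have "\<And>k. y k * fvec m k = (if k = m then y k else 0)" by (simp add: fvec_def uvec_def)
    then show "(\<Sum>k<N. y k * fvec m k) = y m" using m by (simp add: sum.delta')
  qed
  have 1: "(\<Sum>k<N. y k * (\<Sum>i<N - 1. lamI i * (fvec (i + 1) k - fvec i k)))
      = (\<Sum>i<N - 1. lamI i * ((\<Sum>k<N. y k * fvec (i+1) k) - (\<Sum>k<N. y k * fvec i k)))"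
  proof -
    have "(\<Sum>k<N. y k * (\<Sum>i<N - 1. lamI i * (fvec (i + 1) k - fvec i k)))
        = (\<Sum>k<N. \<Sum>i<N - 1. lamI i * (y k * fvec (i+1) k - y k * fvec i k))"
      by (simp add: sum_distrib_left algebra_simps)
    also have "\<dots> = (\<Sum>i<N - 1. \<Sum>k<N. lamI i * (y k * fvec (i+1) k - y k * fvec i k))"
      by (rule sum.swap)
    also have "\<dots> = (\<Sum>i<N - 1. lamI i * ((\<Sum>k<N. y k * fvec (i+1) k) - (\<Sum>k<N. y k * fvec i k)))"
      by (simp add: sum_distrib_left[symmetric] sum_subtractf[symmetric])
    finally show ?thesis .
  qed
  have 2: "(\<Sum>k<N. y k * (\<Sum>i<N. lamS i * fvec i k)) = (\<Sum>i<N. lamS i * (\<Sum>k<N. y k * fvec i k))"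
  proof -
    have "(\<Sum>k<N. y k * (\<Sum>i<N. lamS i * fvec i k)) = (\<Sum>k<N. \<Sum>i<N. lamS i * (y k * fvec i k))"
      by (simp add: sum_distrib_left algebra_simps)
    also have "\<dots> = (\<Sum>i<N. \<Sum>k<N. lamS i * (y k * fvec i k))" by (rule sum.swap)
    finally show ?thesis by (simp add: sum_distrib_left)
  qed
  have 3: "(\<Sum>k<N. y k * (lamNs * fvec (N - 1) k)) = lamNs * (\<Sum>k<N. y k * fvec (N-1) k)"
    by (simp add: sum_distrib_left algebra_simps)
  have "0 = (\<Sum>k<N. y k * ((\<Sum>i<N - 1. lamI i * (fvec (i + 1) k - fvec i k))
            + (\<Sum>i<N. lamS i * fvec i k) - lamNs * fvec (N - 1) k))"
    using C by simp
  also have "\<dots> = (\<Sum>k<N. y k * (\<Sum>i<N - 1. lamI i * (fvec (i + 1) k - fvec i k)))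
     + (\<Sum>k<N. y k * (\<Sum>i<N. lamS i * fvec i k)) - (\<Sum>k<N. y k * (lamNs * fvec (N - 1) k))"
    by (simp add: distrib_left right_diff_distrib sum.distrib sum_subtractf)
  also have "\<dots> = (\<Sum>i<N - 1. lamI i * (y (i+1) - y i)) + (\<Sum>i<N. lamS i * y i) - lamNs * y (N-1)"
    unfolding 1 2 3 using N by (simp add: d)
  finally show ?thesis by simp
qed

lemma lamI_partial:
  assumes C: "\<forall>k<N. (\<Sum>i<N - 1. lamI i * (fvec (i + 1) k - fvec i k))
            + (\<Sum>i<N. lamS i * fvec i k) - lamNs * fvec (N - 1) k = 0"
  and N: "1 < N" and m: "m < N - 1"
  shows "lamI m = (\<Sum>i\<le>m. lamS i)"
proof -
  let ?y = "\<lambda>i. if i \<le> m then 1 else (0::real)"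
  have e: "(\<Sum>i<N - 1. lamI i * (?y (i+1) - ?y i)) + (\<Sum>i<N. lamS i * ?y i) - lamNs * ?y (N-1) = 0"
    by (rule cons_y[OF C N])
  have a: "(\<Sum>i<N - 1. lamI i * (?y (i+1) - ?y i)) = - lamI m"
  proof -
    have "(\<Sum>i<N - 1. lamI i * (?y (i+1) - ?y i)) = (\<Sum>i<N - 1. if i = m then - lamI m else 0)"
      by (rule sum.cong) auto
    then show ?thesis using m by (simp add: sum.delta)
  qed
  have b: "(\<Sum>i<N. lamS i * ?y i) = (\<Sum>i\<le>m. lamS i)"
  proof -
    have "(\<Sum>i<N. lamS i * ?y i) = (\<Sum>i<N. if i \<in> {..m} then lamS i else 0)"
      by (rule sum.cong) auto
    also have "\<dots> = (\<Sum>i\<in>{..<N} \<inter> {..m}. lamS i)" by (simp add: sum.inter_restrict)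
    also have "{..<N} \<inter> {..m} = {..m}" using m by auto
    finally show ?thesis .
  qed
  have c: "?y (N-1) = 0" using m by simp
  show ?thesis using e a b c by simp
qed

lemma lamNs_total:
  assumes C: "\<forall>k<N. (\<Sum>i<N - 1. lamI i * (fvec (i + 1) k - fvec i k))
            + (\<Sum>i<N. lamS i * fvec i k) - lamNs * fvec (N - 1) k = 0"
  and N: "1 < N"
  shows "lamNs = (\<Sum>i<N. lamS i)"
  using cons_y[OF C N, of "\<lambda>_. 1"] by simp

lemma rep_scale:
  fixes x x0 :: "'a::real_vector" and g :: "nat \<Rightarrow> 'a"
  assumes x: "x = (1 - \<mu> / L * (\<Sum>j<i. a j)) *\<^sub>R x0 - (\<Sum>j<i. (a j / L) *\<^sub>R g j)"
    and ab: "\<forall>j<i. c * a j = b j"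
  shows "c *\<^sub>R x = (c - \<mu> / L * (\<Sum>j<i. b j)) *\<^sub>R x0 - (\<Sum>j<i. (b j / L) *\<^sub>R g j)"
proof -
  have s1: "(\<Sum>j<i. b j) = c * (\<Sum>j<i. a j)" using ab by (simp add: sum_distrib_left)
  have s2: "(\<Sum>j<i. (b j / L) *\<^sub>R g j) = c *\<^sub>R (\<Sum>j<i. (a j / L) *\<^sub>R g j)"
    using ab by (simp add: scaleR_sum_right)
  have s3: "c - \<mu> / L * (c * (\<Sum>j<i. a j)) = c * (1 - \<mu> / L * (\<Sum>j<i. a j))"
    by (simp add: algebra_simps)
  show ?thesis unfolding s1 s2 s3 x by (simp add: scaleR_diff_right)
qed

theorem lemma6:
  fixes N :: nat and \<mu> L \<tau> lamNs :: real
    and lamI lamS :: "nat \<Rightarrow> real" and bet :: "nat \<Rightarrow> nat \<Rightarrow> real"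
  assumes "N > 1" and "0 \<le> \<mu>" and "\<mu> < L"
    and opt: "minimaxR_optimal N \<mu> L \<tau> lamI lamS lamNs bet"
  shows "(\<forall>i<N - 1. lamI i = 0 \<longrightarrow> (\<forall>j<i. bet i j = 0))
       \<and> (lamNs = 0 \<longrightarrow> (\<forall>j<N - 1. bet (N - 1) j = 0))
       \<and> (\<forall>(f :: 'a::euclidean_space \<Rightarrow> real) gf (w :: nat \<Rightarrow> 'a) ws.
            in_F \<mu> L f gf \<longrightarrow> (\<forall>x. f ws \<le> f x) \<longrightarrow>
            (\<forall>k\<in>{1..N}. w k - ws =
                (1 - \<mu> / L * (\<Sum>i<k. alpha_coef N lamI lamNs bet k i)) *\<^sub>R (w 0 - ws)
                - (\<Sum>i<k. (alpha_coef N lamI lamNs bet k i / L) *\<^sub>R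
                            (gf (w i) - \<mu> *\<^sub>R (w i - ws)))) \<longrightarrow>
            (norm (w N - ws))\<^sup>2 \<le> \<tau> * (norm (w 0 - ws))\<^sup>2)"
proof -
  note N = assms(1)
  have feas: "minimaxR_feasible N \<mu> L \<tau> lamI lamS lamNs bet"
    using opt unfolding minimaxR_optimal_def by blast
  have nI: "\<forall>i<N - 1. 0 \<le> lamI i" and nS: "\<forall>i<N. 0 \<le> lamS i" and nN: "0 \<le> lamNs"
    and psdB: "psd (N + 2) (blockmat (N + 1) (Smat N \<mu> L \<tau> lamI lamS lamNs bet) (wNvec N \<mu> L bet))"
    and C: "\<forall>k<N. (\<Sum>i<N - 1. lamI i * (fvec (i + 1) k - fvec i k))
            + (\<Sum>i<N. lamS i * fvec i k) - lamNs * fvec (N - 1) k = 0"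
    using feas unfolding minimaxR_feasible_def by blast+
  have L0: "0 < L" using assms by linarith
  have M0: "0 < L - \<mu>" using assms by linarith
  have mono0: "\<forall>k\<le>i. lamI k = 0 \<and> lamS k = 0" if i: "i < N - 1" and z: "lamI i = 0" for i
  proof -
    have "(\<Sum>k\<le>i. lamS k) = 0" using lamI_partial[OF C N i] z by simp
    then have s0: "\<forall>k\<le>i. lamS k = 0" using nS i by (subst (asm) sum_nonneg_eq_0_iff) auto
    have "\<forall>k\<le>i. lamI k = 0"
    proof (intro allI impI)
      fix k assume ki: "k \<le> i"
      then have "lamI k = (\<Sum>k'\<le>k. lamS k')" using lamI_partial[OF C N, of k] i by simp
      also have "\<dots> = 0" using s0 ki by (intro sum.neutral) auto
      finally show "lamI k = 0" .
    qed
    then show ?thesis using s0 by simp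
  qed
  have monoN: "(\<forall>k<N. lamS k = 0) \<and> (\<forall>k<N - 1. lamI k = 0)" if z: "lamNs = 0"
  proof -
    have "(\<Sum>k<N. lamS k) = 0" using lamNs_total[OF C N] z by simp
    then have s0: "\<forall>k<N. lamS k = 0" using nS by (subst (asm) sum_nonneg_eq_0_iff) auto
    have "\<forall>k<N - 1. lamI k = 0"
    proof (intro allI impI)
      fix k assume ki: "k < N - 1"
      then have "lamI k = (\<Sum>k'\<le>k. lamS k')" using lamI_partial[OF C N, of k] by simp
      also have "\<dots> = 0" using s0 ki by (intro sum.neutral) auto
      finally show "lamI k = 0" .
    qed
    then show ?thesis using s0 by simp
  qed
  have Bent: "blockmat (N + 1) (Smat N \<mu> L \<tau> lamI lamS lamNs bet) (wNvec N \<mu> L bet) p q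
       = Smat N \<mu> L \<tau> lamI lamS lamNs bet p q" if "p < N + 1" "q < N + 1" for p q
    using that by (simp add: blockmat_def)
  have rowzero: "bet i j = 0"
    if ji: "j < i" and iN: "i < N"
     and HI: "\<forall>k\<le>i. k < N - 1 \<longrightarrow> lamI k = 0"
     and HS: "\<forall>k\<le>i. lamS k = 0"
     and HN: "i = N - 1 \<longrightarrow> lamNs = 0"
     and HB: "\<forall>l<i-1. bet (i-1) l = 0" for i j
  proof -
    have d: "Smat N \<mu> L \<tau> lamI lamS lamNs bet (i+1) (i+1) = 0"
      using N ji iN HI HS HN HB by (rule Smat_entries(1))
    have o: "Smat N \<mu> L \<tau> lamI lamS lamNs bet (i+1) (j+1) = bet i j / (2*L)"
      using N ji iN HI HS HN HB by (rule Smat_entries(2))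
    have "blockmat (N + 1) (Smat N \<mu> L \<tau> lamI lamS lamNs bet) (wNvec N \<mu> L bet) (i+1) (j+1) = 0"
    proof (rule psd_zero_diag[OF psdB])
      show "i + 1 < N + 2" "j + 1 < N + 2" using iN ji by auto
      show "blockmat (N + 1) (Smat N \<mu> L \<tau> lamI lamS lamNs bet) (wNvec N \<mu> L bet) (i + 1) (i + 1) = 0"
        using Bent[of "i+1" "i+1"] iN d by simp
    qed
    moreover have "blockmat (N + 1) (Smat N \<mu> L \<tau> lamI lamS lamNs bet) (wNvec N \<mu> L bet) (i+1) (j+1) = bet i j / (2*L)"
      using o Bent[of "i+1" "j+1"] iN ji by simp
    ultimately show ?thesis using L0 by simp
  qed
  have P1: "\<forall>j<i. bet i j = 0" if "i < N - 1" "lamI i = 0" for i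
    using that
  proof (induct i)
    case 0 then show ?case by simp
  next
    case (Suc i)
    have H: "\<forall>k\<le>Suc i. lamI k = 0 \<and> lamS k = 0" using mono0[OF Suc.prems] .
    have HB: "\<forall>l<Suc i - 1. bet (Suc i - 1) l = 0" using Suc H by simp
    show ?case
    proof (intro allI impI)
      fix j assume j: "j < Suc i"
      show "bet (Suc i) j = 0"
        by (rule rowzero[OF j]) (use Suc.prems H HB in auto)
    qed
  qed
  have P2: "\<forall>j<N - 1. bet (N - 1) j = 0" if z: "lamNs = 0"
  proof (intro allI impI)
    fix j assume j: "j < N - 1"
    have H: "(\<forall>k<N. lamS k = 0) \<and> (\<forall>k<N - 1. lamI k = 0)" using monoN[OF z] .
    have HB: "\<forall>l<N - 1 - 1. bet (N - 1 - 1) l = 0"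
    proof -
      have a: "N - 2 < N - 1" using N by simp
      have b: "lamI (N-2) = 0" using H a by blast
      have "\<forall>j<N-2. bet (N-2) j = 0" by (rule P1[OF a b])
      moreover have "N - 1 - 1 = N - 2" by simp
      ultimately show ?thesis by simp
    qed
    show "bet (N - 1) j = 0"
      by (rule rowzero[OF j]) (use H HB z N in auto)
  qed
  have part3: "\<forall>(f :: 'a::euclidean_space \<Rightarrow> real) gf (w :: nat \<Rightarrow> 'a) ws.
            in_F \<mu> L f gf \<longrightarrow> (\<forall>x. f ws \<le> f x) \<longrightarrow>
            (\<forall>k\<in>{1..N}. w k - ws =
                (1 - \<mu> / L * (\<Sum>i<k. alpha_coef N lamI lamNs bet k i)) *\<^sub>R (w 0 - ws)
                - (\<Sum>i<k. (alpha_coef N lamI lamNs bet k i / L) *\<^sub>R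
                            (gf (w i) - \<mu> *\<^sub>R (w i - ws)))) \<longrightarrow>
            (norm (w N - ws))\<^sup>2 \<le> \<tau> * (norm (w 0 - ws))\<^sup>2"
  proof (intro allI impI)
    fix f :: "'a::euclidean_space \<Rightarrow> real" and gf w ws
    assume F: "in_F \<mu> L f gf" and mn: "\<forall>x. f ws \<le> f x"
      and rec: "\<forall>k\<in>{1..N}. w k - ws =
                (1 - \<mu> / L * (\<Sum>i<k. alpha_coef N lamI lamNs bet k i)) *\<^sub>R (w 0 - ws)
                - (\<Sum>i<k. (alpha_coef N lamI lamNs bet k i / L) *\<^sub>R
                            (gf (w i) - \<mu> *\<^sub>R (w i - ws)))"
    show "(norm (w N - ws))\<^sup>2 \<le> \<tau> * (norm (w 0 - ws))\<^sup>2"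
    proof -
      define G where "G = (\<lambda>x. gf x - \<mu> *\<^sub>R (x - ws))"
      define h where "h = (\<lambda>x. f x - \<mu> / 2 * (norm (x - ws))\<^sup>2)"
      define g where "g = (\<lambda>i. G (w i))"
      define xk where "xk = (\<lambda>i. w i - ws)"
      define K where "K = 1 / (2 * (L - \<mu>))"
      define \<alpha> where "\<alpha> = alpha_coef N lamI lamNs bet"
      define v where "v = (\<lambda>p. if p = 0 then xk 0 else g (p - 1))"
      have gz: "gf ws = 0" using grad_zero[OF F L0 mn] .
      have Gws: "G ws = 0" by (simp add: G_def gz)
      have lo: "\<forall>x y. h x \<ge> h y + inner (G y) (x - y)"
        unfolding h_def G_def by (rule tilde_bounds(1)[OF F])
      have up: "\<forall>x y. h x \<le> h y + inner (G y) (x - y) + (L - \<mu>) / 2 * (norm (x - y))\<^sup>2"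
        unfolding h_def G_def by (rule tilde_bounds(2)[OF F])
      have ineq: "h x \<ge> h y + inner (G y) (x - y) + K * inner (G x - G y) (G x - G y)" for x y
        using interp[OF M0 lo up, where x=x and y=y] by (simp add: K_def power2_norm_eq_inner)
      have rec': "xk k = (1 - \<mu> / L * (\<Sum>i<k. \<alpha> k i)) *\<^sub>R xk 0 - (\<Sum>i<k. (\<alpha> k i / L) *\<^sub>R g i)"
        if "1 \<le> k" "k \<le> N" for k
        using rec that by (simp add: xk_def g_def G_def \<alpha>_def)
      have repI: "lamI i *\<^sub>R xk i = (lamI i - \<mu> / L * (\<Sum>j<i. bet i j)) *\<^sub>R xk 0 - (\<Sum>j<i. (bet i j / L) *\<^sub>R g j)"
        if i: "i < N - 1" for i
      proof (cases "i = 0")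
        case True then show ?thesis by simp
      next
        case False
        have ab: "\<forall>j<i. lamI i * \<alpha> i j = bet i j"
        proof (intro allI impI)
          fix j assume j: "j < i"
          show "lamI i * \<alpha> i j = bet i j"
          proof (cases "lamI i = 0")
            case True then show ?thesis using P1[OF i True] j by (simp add: \<alpha>_def alpha_coef_def)
          next
            case False2: False
            then show ?thesis using False i by (simp add: \<alpha>_def alpha_coef_def)
          qed
        qed
        show ?thesis by (rule rep_scale[OF rec' ab]) (use False i in auto)
      qed
      have repN: "lamNs *\<^sub>R xk (N - 1) = (lamNs - \<mu> / L * (\<Sum>j<N - 1. bet (N - 1) j)) *\<^sub>R xk 0
           - (\<Sum>j<N - 1. (bet (N - 1) j / L) *\<^sub>R g j)"
      proof -
        have ab: "\<forall>j<N - 1. lamNs * \<alpha> (N - 1) j = bet (N - 1) j"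
        proof (intro allI impI)
          fix j assume j: "j < N - 1"
          show "lamNs * \<alpha> (N - 1) j = bet (N - 1) j"
          proof (cases "lamNs = 0")
            case True then show ?thesis using P2[OF True] j by (simp add: \<alpha>_def alpha_coef_def)
          next
            case False
            then show ?thesis using N by (simp add: \<alpha>_def alpha_coef_def)
          qed
        qed
        show ?thesis by (rule rep_scale[OF rec' ab]) (use N in auto)
      qed
      have alN: "\<alpha> N j = bet N j" for j using N unfolding \<alpha>_def alpha_coef_def by auto
      have xN: "xk N = (1 - \<mu> / L * (\<Sum>i<N. bet N i)) *\<^sub>R xk 0 - (\<Sum>i<N. (bet N i / L) *\<^sub>R g i)"
        using rec'[of N] N by (simp add: alN)
      have v0: "v 0 = xk 0" and vS: "\<And>i. v (Suc i) = g i" and v1: "v 1 = g 0" and vN: "v N = g (N - 1)"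
        using N by (auto simp: v_def)
      have linw: "lin (Suc N) v (wNvec N \<mu> L bet) = xk N"
      proof -
        have gl: "\<And>i. i < N \<Longrightarrow> lin (Suc N) v (gvec i) = g i" by (simp add: gvec_def lin_uvec vS)
        have wl: "lin (Suc N) v wvec0 = xk 0" by (simp add: wvec0_def lin_uvec v0)
        show ?thesis unfolding lin_wN xN wl by (simp add: gl)
      qed
      define z where "z = - xk N"
      have "0 \<le> Phi (N + 2) (\<lambda>p. if p < N + 1 then v p else z)
                  (blockmat (N + 1) (Smat N \<mu> L \<tau> lamI lamS lamNs bet) (wNvec N \<mu> L bet))"
        by (rule Phi_psd[OF psdB])
      also have "\<dots> = Phi (N + 1) v (Smat N \<mu> L \<tau> lamI lamS lamNs bet) - inner (xk N) (xk N)"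
        using Phi_block[of "N + 1" v z "Smat N \<mu> L \<tau> lamI lamS lamNs bet" "wNvec N \<mu> L bet"]
        by (simp add: linw z_def)
      finally have PB: "inner (xk N) (xk N) \<le> Phi (N + 1) v (Smat N \<mu> L \<tau> lamI lamS lamNs bet)" by simp
      have PS: "Phi (N+1) v (Smat N \<mu> L \<tau> lamI lamS lamNs bet) =
         K * (lamNs * inner (g (N-1)) (g (N-1)) + (\<Sum>i<N. lamS i * inner (g i) (g i))
            + (\<Sum>i<N-1. lamI i * inner (g i - g (Suc i)) (g i - g (Suc i))))
         - lamS 0 * inner (g 0) (xk 0)
         - (\<Sum>i\<in>{1..N-2}. (lamI i - \<mu>/L * (\<Sum>j<i. bet i j)) * inner (g i) (xk 0))
         + (\<Sum>i\<in>{1..N-2}. \<Sum>j<i. bet i j / L * inner (g i) (g j))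
         - (lamNs - \<mu>/L * (\<Sum>j<N-1. bet (N-1) j)) * inner (g (N - 1)) (xk 0)
         + (\<Sum>j<N-1. bet (N-1) j / L * inner (g (N - 1)) (g j))
         + (\<Sum>i<N-1. (lamI i - \<mu>/L * (\<Sum>j<i. bet i j)) * inner (g (Suc i)) (xk 0))
         - (\<Sum>i<N-1. \<Sum>j<i. bet i j / L * inner (g (Suc i)) (g j))
         + \<tau> * inner (xk 0) (xk 0)"
        unfolding Phi_Smat[OF N] K_def by (simp only: v0 vS v1 vN)
      have gG: "G (w i) = g i" for i by (simp add: g_def)
      have lamS0: "lamS 0 * inner (g 0) (xk 0) = lamI 0 * inner (g 0) (xk 0)"
        using lamI_partial[OF C N, of 0] N by simp
      have TA: "(\<Sum>i\<in>{1..N-2}. (lamI i - \<mu>/L * (\<Sum>j<i. bet i j)) * inner (g i) (xk 0))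
          - (\<Sum>i\<in>{1..N-2}. \<Sum>j<i. bet i j / L * inner (g i) (g j))
          = (\<Sum>i\<in>{1..N-2}. lamI i * inner (g i) (xk i))"
      proof -
        have "(\<Sum>i\<in>{1..N-2}. (lamI i - \<mu>/L * (\<Sum>j<i. bet i j)) * inner (g i) (xk 0))
          - (\<Sum>i\<in>{1..N-2}. \<Sum>j<i. bet i j / L * inner (g i) (g j))
          = (\<Sum>i\<in>{1..N-2}. (lamI i - \<mu>/L * (\<Sum>j<i. bet i j)) * inner (g i) (xk 0)
               - (\<Sum>j<i. bet i j / L * inner (g i) (g j)))"
          by (simp add: sum_subtractf)
        also have "\<dots> = (\<Sum>i\<in>{1..N-2}. lamI i * inner (g i) (xk i))"
        proof (rule sum.cong[OF refl])
          fix i assume "i \<in> {1..N-2}"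
          then have i: "i < N - 1" using N by auto
          have "lamI i * inner (g i) (xk i) = inner (g i) (lamI i *\<^sub>R xk i)" by simp
          also have "\<dots> = (lamI i - \<mu>/L * (\<Sum>j<i. bet i j)) * inner (g i) (xk 0)
               - (\<Sum>j<i. bet i j / L * inner (g i) (g j))"
            unfolding repI[OF i] by (simp add: inner_diff_right inner_sum_right)
          finally show "(lamI i - \<mu>/L * (\<Sum>j<i. bet i j)) * inner (g i) (xk 0)
               - (\<Sum>j<i. bet i j / L * inner (g i) (g j)) = lamI i * inner (g i) (xk i)" by simp
        qed
        finally show ?thesis .
      qed
      have TB: "(\<Sum>i<N-1. (lamI i - \<mu>/L * (\<Sum>j<i. bet i j)) * inner (g (Suc i)) (xk 0))
          - (\<Sum>i<N-1. \<Sum>j<i. bet i j / L * inner (g (Suc i)) (g j))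
          = (\<Sum>i<N-1. lamI i * inner (g (Suc i)) (xk i))"
      proof -
        have "(\<Sum>i<N-1. (lamI i - \<mu>/L * (\<Sum>j<i. bet i j)) * inner (g (Suc i)) (xk 0))
          - (\<Sum>i<N-1. \<Sum>j<i. bet i j / L * inner (g (Suc i)) (g j))
          = (\<Sum>i<N-1. (lamI i - \<mu>/L * (\<Sum>j<i. bet i j)) * inner (g (Suc i)) (xk 0)
               - (\<Sum>j<i. bet i j / L * inner (g (Suc i)) (g j)))"
          by (simp add: sum_subtractf)
        also have "\<dots> = (\<Sum>i<N-1. lamI i * inner (g (Suc i)) (xk i))"
        proof (rule sum.cong[OF refl])
          fix i assume "i \<in> {..<N-1}"
          then have i: "i < N - 1" by auto
          have "lamI i * inner (g (Suc i)) (xk i) = inner (g (Suc i)) (lamI i *\<^sub>R xk i)" by simp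
          also have "\<dots> = (lamI i - \<mu>/L * (\<Sum>j<i. bet i j)) * inner (g (Suc i)) (xk 0)
               - (\<Sum>j<i. bet i j / L * inner (g (Suc i)) (g j))"
            unfolding repI[OF i] by (simp add: inner_diff_right inner_sum_right)
          finally show "(lamI i - \<mu>/L * (\<Sum>j<i. bet i j)) * inner (g (Suc i)) (xk 0)
               - (\<Sum>j<i. bet i j / L * inner (g (Suc i)) (g j)) = lamI i * inner (g (Suc i)) (xk i)" by simp
        qed
        finally show ?thesis .
      qed
      have TC: "(lamNs - \<mu>/L * (\<Sum>j<N-1. bet (N-1) j)) * inner (g (N - 1)) (xk 0)
          - (\<Sum>j<N-1. bet (N-1) j / L * inner (g (N - 1)) (g j))
          = lamNs * inner (g (N - 1)) (xk (N - 1))"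
      proof -
        have "lamNs * inner (g (N - 1)) (xk (N - 1)) = inner (g (N - 1)) (lamNs *\<^sub>R xk (N - 1))" by simp
        also have "\<dots> = (lamNs - \<mu>/L * (\<Sum>j<N-1. bet (N-1) j)) * inner (g (N - 1)) (xk 0)
          - (\<Sum>j<N-1. bet (N-1) j / L * inner (g (N - 1)) (g j))"
          unfolding repN by (simp add: inner_diff_right inner_sum_right)
        finally show ?thesis by simp
      qed
      have split0: "(\<Sum>i<N-1. lamI i * inner (g i) (xk i))
          = lamI 0 * inner (g 0) (xk 0) + (\<Sum>i\<in>{1..N-2}. lamI i * inner (g i) (xk i))"
      proof -
        have "{..<N-1} = insert 0 {1..N-2}" using N by auto
        then show ?thesis by simp
      qed
      have IA: "h (w (Suc i)) - h (w i) + inner (g (Suc i)) (xk i) - inner (g (Suc i)) (xk (Suc i))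
           + K * inner (g i - g (Suc i)) (g i - g (Suc i)) \<le> 0" for i
      proof -
        have e: "inner (g (Suc i)) (w i - w (Suc i)) = inner (g (Suc i)) (xk i) - inner (g (Suc i)) (xk (Suc i))"
          by (simp add: xk_def inner_diff_right)
        show ?thesis using ineq[where x="w i" and y="w (Suc i)", unfolded gG] e by linarith
      qed
      have IB: "h (w i) - h ws - inner (g i) (xk i) + K * inner (g i) (g i) \<le> 0" for i
      proof -
        have e: "inner (g i) (ws - w i) = - inner (g i) (xk i)"
          by (simp add: xk_def inner_diff_right)
        have e2: "inner (0 - g i) (0 - g i) = inner (g i) (g i)" by simp
        show ?thesis using ineq[where x="ws" and y="w i", unfolded gG Gws e2] e by linarith
      qed
      have IC: "h ws - h (w (N - 1)) + K * inner (g (N - 1)) (g (N - 1)) \<le> 0"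
      proof -
        have e2: "inner (g (N - 1) - 0) (g (N - 1) - 0) = inner (g (N - 1)) (g (N - 1))" by simp
        show ?thesis using ineq[where x="w (N - 1)" and y=ws, unfolded gG Gws e2] by simp
      qed
      have WA: "(\<Sum>i<N-1. lamI i * (h (w (Suc i)) - h (w i) + inner (g (Suc i)) (xk i) - inner (g (Suc i)) (xk (Suc i))
           + K * inner (g i - g (Suc i)) (g i - g (Suc i)))) \<le> 0"
        using nI IA by (intro sum_nonpos mult_nonneg_nonpos) auto
      have WB: "(\<Sum>i<N. lamS i * (h (w i) - h ws - inner (g i) (xk i) + K * inner (g i) (g i))) \<le> 0"
        using nS IB by (intro sum_nonpos mult_nonneg_nonpos) auto
      have WC: "lamNs * (h ws - h (w (N - 1)) + K * inner (g (N - 1)) (g (N - 1))) \<le> 0"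
        using nN IC by (intro mult_nonneg_nonpos) auto
      have EA: "(\<Sum>i<N-1. lamI i * (h (w (Suc i)) - h (w i) + inner (g (Suc i)) (xk i) - inner (g (Suc i)) (xk (Suc i))
           + K * inner (g i - g (Suc i)) (g i - g (Suc i))))
         = (\<Sum>i<N-1. lamI i * (h (w (Suc i)) - h (w i))) + (\<Sum>i<N-1. lamI i * inner (g (Suc i)) (xk i))
           - (\<Sum>i<N-1. lamI i * (inner (g (Suc i)) (xk (Suc i)) - inner (g i) (xk i)))
           - (\<Sum>i<N-1. lamI i * inner (g i) (xk i))
           + K * (\<Sum>i<N-1. lamI i * inner (g i - g (Suc i)) (g i - g (Suc i)))"
      proof -
        have "(\<Sum>i<N-1. lamI i * (h (w (Suc i)) - h (w i) + inner (g (Suc i)) (xk i) - inner (g (Suc i)) (xk (Suc i))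
           + K * inner (g i - g (Suc i)) (g i - g (Suc i))))
          = (\<Sum>i<N-1. lamI i * (h (w (Suc i)) - h (w i)) + lamI i * inner (g (Suc i)) (xk i)
           - lamI i * (inner (g (Suc i)) (xk (Suc i)) - inner (g i) (xk i))
           - lamI i * inner (g i) (xk i)
           + K * (lamI i * inner (g i - g (Suc i)) (g i - g (Suc i))))"
          by (rule sum.cong[OF refl]) (simp add: algebra_simps)
        then show ?thesis by (simp add: sum.distrib sum_subtractf sum_distrib_left)
      qed
      have EB: "(\<Sum>i<N. lamS i * (h (w i) - h ws - inner (g i) (xk i) + K * inner (g i) (g i)))
         = (\<Sum>i<N. lamS i * h (w i)) - h ws * (\<Sum>i<N. lamS i) - (\<Sum>i<N. lamS i * inner (g i) (xk i))
           + K * (\<Sum>i<N. lamS i * inner (g i) (g i))"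
      proof -
        have "(\<Sum>i<N. lamS i * (h (w i) - h ws - inner (g i) (xk i) + K * inner (g i) (g i)))
          = (\<Sum>i<N. lamS i * h (w i) - h ws * lamS i - lamS i * inner (g i) (xk i)
              + K * (lamS i * inner (g i) (g i)))"
          by (rule sum.cong[OF refl]) (simp add: algebra_simps)
        then show ?thesis by (simp add: sum.distrib sum_subtractf sum_distrib_left)
      qed
      have EC: "lamNs * (h ws - h (w (N - 1)) + K * inner (g (N - 1)) (g (N - 1)))
         = lamNs * h ws - lamNs * h (w (N - 1)) + K * (lamNs * inner (g (N - 1)) (g (N - 1)))"
        by (simp add: algebra_simps)
      have CY1: "(\<Sum>i<N-1. lamI i * (h (w (Suc i)) - h (w i))) + (\<Sum>i<N. lamS i * h (w i))
           - lamNs * h (w (N - 1)) = 0"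
        using cons_y[OF C N, of "\<lambda>i. h (w i)"] by simp
      have CY2: "(\<Sum>i<N-1. lamI i * (inner (g (Suc i)) (xk (Suc i)) - inner (g i) (xk i)))
           + (\<Sum>i<N. lamS i * inner (g i) (xk i)) - lamNs * inner (g (N - 1)) (xk (N - 1)) = 0"
        using cons_y[OF C N, of "\<lambda>i. inner (g i) (xk i)"] by simp
      have Hws: "h ws * (\<Sum>i<N. lamS i) = lamNs * h ws" using lamNs_total[OF C N] by simp
      have KD: "K * (lamNs * inner (g (N-1)) (g (N-1)) + (\<Sum>i<N. lamS i * inner (g i) (g i))
            + (\<Sum>i<N-1. lamI i * inner (g i - g (Suc i)) (g i - g (Suc i))))
          = K * (lamNs * inner (g (N-1)) (g (N-1))) + K * (\<Sum>i<N. lamS i * inner (g i) (g i))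
            + K * (\<Sum>i<N-1. lamI i * inner (g i - g (Suc i)) (g i - g (Suc i)))"
        by (simp add: distrib_left)
      have fin: "inner (xk N) (xk N) \<le> \<tau> * inner (xk 0) (xk 0)"
      proof -
        note WA' = WA[unfolded EA] and WB' = WB[unfolded EB] and WC' = WC[unfolded EC]
        have Q: "(\<Sum>i<N-1. lamI i * inner (g (Suc i)) (xk i)) - (\<Sum>i<N-1. lamI i * inner (g i) (xk i))
           - lamNs * inner (g (N - 1)) (xk (N - 1)) + K * (lamNs * inner (g (N-1)) (g (N-1)))
           + K * (\<Sum>i<N. lamS i * inner (g i) (g i))
           + K * (\<Sum>i<N-1. lamI i * inner (g i - g (Suc i)) (g i - g (Suc i))) \<le> 0"
          using WA' WB' WC' CY1 CY2 Hws by linarith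
        have P: "Phi (N + 1) v (Smat N \<mu> L \<tau> lamI lamS lamNs bet) =
           (\<Sum>i<N-1. lamI i * inner (g (Suc i)) (xk i)) - (\<Sum>i<N-1. lamI i * inner (g i) (xk i))
           - lamNs * inner (g (N - 1)) (xk (N - 1)) + K * (lamNs * inner (g (N-1)) (g (N-1)))
           + K * (\<Sum>i<N. lamS i * inner (g i) (g i))
           + K * (\<Sum>i<N-1. lamI i * inner (g i - g (Suc i)) (g i - g (Suc i))) + \<tau> * inner (xk 0) (xk 0)"
          using PS[unfolded KD] TA TB TC split0 lamS0 by linarith
        show ?thesis using PB P Q by linarith
      qed
      then show ?thesis by (simp add: xk_def power2_norm_eq_inner)
    qed
  qed
  have c1: "\<forall>i<N - 1. lamI i = 0 \<longrightarrow> (\<forall>j<i. bet i j = 0)" using P1 by blast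
  have c2: "lamNs = 0 \<longrightarrow> (\<forall>j<N - 1. bet (N - 1) j = 0)" using P2 by blast
  show ?thesis by (intro conjI c1 c2 part3)
qed

end
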